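(* Let $\Sigma$ be a labeled graph over $\mathcal B$, let $\alpha\in\mathrm{Aut}(F(\mathcal B))$, and let $\sigma$ be an immersed edge path in $\alpha\Sigma$. Then there are an immersed edge path $\hat\sigma=e_0\cdots e_m$ in $\Sigma$, an initial edge subpath $\sigma_0$ of $\alpha(e_0)$, and a terminal edge subpath $\sigma_m$ of $\alpha(e_m)$ such that $\sigma_0\neq\alpha(e_0)$, $\sigma_m\neq\alpha(e_m)$, and $\alpha(\hat\sigma)$ is the immersed edge path $\sigma_0\sigma\sigma_m$.
   Context: $F(\mathcal B)$ is the free group on the finite set $\mathcal B$. A labeled graph assigns to each oriented edge a label in $\mathcal B^{\pm1}$, with $e^{-1}$ carrying the inverse label. For $\alpha\in\mathrm{Aut}(F(\mathcal B))$, the labeled graph $\alpha\Sigma$ is obtained from $\Sigma$ by replacing each oriented edge $e$ with label $c$ by a path $\alpha(e)$ of $k$ subedges, where $\alpha(c)$ is the reduced word $c_1^{\delta_1}\cdots c_k^{\delta_k}$ ($c_i\in\mathcal B$, $\delta_i=\pm1$), the $i$-th subedge being labeled $c_i$ and oriented along $e$ if $\delta_i=1$ and oppositely otherwise; $\alpha$ of an edge path is the concatenation of the $\alpha(e_i)$. An edge path is a sequence of oriented edges $e_0\cdots e_m$ with $\partial_1e_{i-1}=\partial_0e_i$; it is immersed if no $e_{i}=e_{i-1}^{-1}$. *)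

theory Defs
  imports Main "HOL-Library.Sublist"
begin

text \<open>A letter of B^{+-1} is a pair (b, s); s = True means b, s = False means b^{-1}.\<close>
type_synonym 'b letter = "'b \<times> bool"

definition inv_letter :: "'b letter \<Rightarrow> 'b letter" where
  "inv_letter x = (fst x, \<not> snd x)"

definition inv_word :: "'b letter list \<Rightarrow> 'b letter list" where
  "inv_word w = rev (map inv_letter w)"

definition reduced :: "'b letter list \<Rightarrow> bool" where
  "reduced w \<longleftrightarrow> (\<forall>i. Suc i < length w \<longrightarrow> w ! Suc i \<noteq> inv_letter (w ! i))"

fun reduce :: "'b letter list \<Rightarrow> 'b letter list" where
  "reduce [] = []"
| "reduce (x # w) = (case reduce w of
       [] \<Rightarrow> [x]
     | y # w' \<Rightarrow> (if y = inv_letter x then w' else x # y # w'))"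

text \<open>An endomorphism of F(B) is given by the reduced images of the generators;
  img phi c is the reduced word alpha(c) for c in B^{+-1}.\<close>
definition img :: "('b \<Rightarrow> 'b letter list) \<Rightarrow> 'b letter \<Rightarrow> 'b letter list" where
  "img \<phi> c = (if snd c then \<phi> (fst c) else inv_word (\<phi> (fst c)))"

definition ext_hom :: "('b \<Rightarrow> 'b letter list) \<Rightarrow> 'b letter list \<Rightarrow> 'b letter list" where
  "ext_hom \<phi> w = reduce (concat (map (img \<phi>) w))"

definition is_aut :: "('b \<Rightarrow> 'b letter list) \<Rightarrow> bool" where
  "is_aut \<phi> \<longleftrightarrow> (\<forall>b. reduced (\<phi> b)) \<and>
     bij_betw (ext_hom \<phi>) {w. reduced w} {w. reduced w}"

record ('v, 'e, 'b) lgraph =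
  verts :: "'v set"
  edges :: "'e set"
  einv :: "'e \<Rightarrow> 'e"
  org :: "'e \<Rightarrow> 'v"
  ter :: "'e \<Rightarrow> 'v"
  lab :: "'e \<Rightarrow> 'b letter"

definition labeled_graph :: "('v, 'e, 'b) lgraph \<Rightarrow> bool" where
  "labeled_graph G \<longleftrightarrow>
     (\<forall>e\<in>edges G. einv G e \<in> edges G \<and> einv G (einv G e) = e \<and> einv G e \<noteq> e
        \<and> org G e \<in> verts G \<and> ter G e = org G (einv G e)
        \<and> lab G (einv G e) = inv_letter (lab G e))"

definition edge_path :: "('v, 'e, 'b) lgraph \<Rightarrow> 'e list \<Rightarrow> bool" where
  "edge_path G p \<longleftrightarrow> p \<noteq> [] \<and> set p \<subseteq> edges G \<and>
     (\<forall>i. Suc i < length p \<longrightarrow> ter G (p ! i) = org G (p ! Suc i))"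

definition immersed :: "('v, 'e, 'b) lgraph \<Rightarrow> 'e list \<Rightarrow> bool" where
  "immersed G p \<longleftrightarrow> edge_path G p \<and>
     (\<forall>i. Suc i < length p \<longrightarrow> p ! Suc i \<noteq> einv G (p ! i))"

definition klen :: "('b \<Rightarrow> 'b letter list) \<Rightarrow> ('v, 'e, 'b) lgraph \<Rightarrow> 'e \<Rightarrow> nat" where
  "klen \<phi> G e = length (img \<phi> (lab G e))"

text \<open>The oriented edge (e, i) of alpha Sigma is the i-th subedge of alpha(e), traversed
  in the direction of e; its label is the i-th letter of alpha(lab e).  New (interior) vertices are represented canonically by
  the set {(e, j), (e^{-1}, k - j)}, the point after j subedges of alpha(e).\<close>
definition subdiv :: "('b \<Rightarrow> 'b letter list) \<Rightarrow> ('v, 'e, 'b) lgraph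
     \<Rightarrow> ('v + ('e \<times> nat) set, 'e \<times> nat, 'b) lgraph" where
  "subdiv \<phi> G =
    \<lparr> verts = Inl ` verts G \<union>
        {Inr {(e, j), (einv G e, klen \<phi> G e - j)} | e j. e \<in> edges G \<and> 0 < j \<and> j < klen \<phi> G e},
      edges = {(e, i). e \<in> edges G \<and> i < klen \<phi> G e},
      einv = (\<lambda>(e, i). (einv G e, klen \<phi> G e - 1 - i)),
      org = (\<lambda>(e, i). if i = 0 then Inl (org G e)
                      else Inr {(e, i), (einv G e, klen \<phi> G e - i)}),
      ter = (\<lambda>(e, i). if Suc i = klen \<phi> G e then Inl (ter G e)
                      else Inr {(e, Suc i), (einv G e, klen \<phi> G e - Suc i)}),
      lab = (\<lambda>(e, i). img \<phi> (lab G e) ! i) \<rparr>"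

definition sub_edge_path :: "('b \<Rightarrow> 'b letter list) \<Rightarrow> ('v, 'e, 'b) lgraph \<Rightarrow> 'e \<Rightarrow> ('e \<times> nat) list" where
  "sub_edge_path \<phi> G e = map (\<lambda>i. (e, i)) [0..<klen \<phi> G e]"

definition sub_path :: "('b \<Rightarrow> 'b letter list) \<Rightarrow> ('v, 'e, 'b) lgraph \<Rightarrow> 'e list \<Rightarrow> ('e \<times> nat) list" where
  "sub_path \<phi> G p = concat (map (sub_edge_path \<phi> G) p)"

end

theory Submission
  imports Defs
begin

lemma all_cons_pairs:
  assumes "p \<noteq> []"
  shows "(\<forall>i. Suc i < length (x#p) \<longrightarrow> P ((x#p)!i) ((x#p)!Suc i)) \<longleftrightarrow>
         P x (hd p) \<and> (\<forall>i. Suc i < length p \<longrightarrow> P (p!i) (p!Suc i))"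
proof (cases p)
  case Nil then show ?thesis using assms by simp
next
  case (Cons y ys)
  show ?thesis
  proof
    assume H: "\<forall>i. Suc i < length (x#p) \<longrightarrow> P ((x#p)!i) ((x#p)!Suc i)"
    have "P x (hd p)" using H[rule_format, of 0] Cons by simp
    moreover have "\<forall>i. Suc i < length p \<longrightarrow> P (p!i) (p!Suc i)"
    proof (intro allI impI)
      fix i assume "Suc i < length p"
      then show "P (p!i) (p!Suc i)" using H[rule_format, of "Suc i"] by simp
    qed
    ultimately show "P x (hd p) \<and> (\<forall>i. Suc i < length p \<longrightarrow> P (p!i) (p!Suc i))" by blast
  next
    assume H: "P x (hd p) \<and> (\<forall>i. Suc i < length p \<longrightarrow> P (p!i) (p!Suc i))"
    show "\<forall>i. Suc i < length (x#p) \<longrightarrow> P ((x#p)!i) ((x#p)!Suc i)"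
    proof (intro allI impI)
      fix i assume i: "Suc i < length (x#p)"
      show "P ((x#p)!i) ((x#p)!Suc i)"
      proof (cases i)
        case 0 then show ?thesis using H Cons by simp
      next
        case (Suc j) then show ?thesis using H i by simp
      qed
    qed
  qed
qed

lemma imm_single: "immersed G [x] \<longleftrightarrow> x \<in> edges G"
  by (simp add: immersed_def edge_path_def)

lemma imm_cons:
  assumes "p \<noteq> []"
  shows "immersed G (x#p) \<longleftrightarrow> x \<in> edges G \<and> ter G x = org G (hd p) \<and> hd p \<noteq> einv G x \<and> immersed G p"
proof -
  have A: "(\<forall>i. Suc i < length (x#p) \<longrightarrow> ter G ((x#p)!i) = org G ((x#p)!Suc i)) \<longleftrightarrow>
         ter G x = org G (hd p) \<and> (\<forall>i. Suc i < length p \<longrightarrow> ter G (p!i) = org G (p!Suc i))"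
    using all_cons_pairs[OF assms, where P="\<lambda>a b. ter G a = org G b"] by simp
  have B: "(\<forall>i. Suc i < length (x#p) \<longrightarrow> (x#p)!Suc i \<noteq> einv G ((x#p)!i)) \<longleftrightarrow>
         hd p \<noteq> einv G x \<and> (\<forall>i. Suc i < length p \<longrightarrow> p!Suc i \<noteq> einv G (p!i))"
    using all_cons_pairs[OF assms, where P="\<lambda>a b. b \<noteq> einv G a"] by simp
  show ?thesis unfolding immersed_def edge_path_def A B using assms by auto
qed

lemma imm_append:
  assumes "p \<noteq> []" "q \<noteq> []"
  shows "immersed G (p@q) \<longleftrightarrow> immersed G p \<and> immersed G q \<and> ter G (last p) = org G (hd q) \<and> hd q \<noteq> einv G (last p)"
  using assms(1)
proof (induction p)
  case Nil then show ?case by simp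
next
  case (Cons x p')
  show ?case
  proof (cases "p' = []")
    case True
    then show ?thesis using imm_cons[OF assms(2), of G x] imm_single[of G x] by auto
  next
    case False
    have "immersed G ((x#p')@q) = immersed G (x#(p'@q))" by simp
    also have "\<dots> \<longleftrightarrow> x \<in> edges G \<and> ter G x = org G (hd p') \<and> hd p' \<noteq> einv G x \<and> immersed G (p'@q)"
      using imm_cons[of "p'@q" G x] False by simp
    finally show ?thesis using Cons.IH[OF False] imm_cons[OF False] False by auto
  qed
qed

lemma subdiv_simps:
  "edges (subdiv \<phi> G) = {(e, i). e \<in> edges G \<and> i < klen \<phi> G e}"
  "einv (subdiv \<phi> G) (e,i) = (einv G e, klen \<phi> G e - 1 - i)"
  "org (subdiv \<phi> G) (e,i) = (if i = 0 then Inl (org G e)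
                      else Inr {(e, i), (einv G e, klen \<phi> G e - i)})"
  "ter (subdiv \<phi> G) (e,i) = (if Suc i = klen \<phi> G e then Inl (ter G e)
                      else Inr {(e, Suc i), (einv G e, klen \<phi> G e - Suc i)})"
  by (simp_all add: subdiv_def)

lemma klen_pos:
  assumes "is_aut \<phi>"
  shows "0 < klen \<phi> G e"
proof -
  have ne: "\<phi> b \<noteq> []" for b
  proof
    assume h: "\<phi> b = []"
    have inj: "inj_on (ext_hom \<phi>) {w. reduced w}" using assms unfolding is_aut_def bij_betw_def by blast
    have r1: "reduced [(b,True)]" by (simp add: reduced_def)
    have r2: "reduced ([] :: 'a letter list)" by (simp add: reduced_def)
    have "ext_hom \<phi> [(b,True)] = ext_hom \<phi> []" using h by (simp add: ext_hom_def img_def)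
    then have "[(b,True)] = []" using inj r1 r2 by (meson inj_onD mem_Collect_eq)
    then show False by simp
  qed
  show ?thesis using ne[of "fst (lab G e)"]
    by (simp add: klen_def img_def inv_word_def)
qed

lemma sep_length[simp]: "length (sub_edge_path \<phi> G e) = klen \<phi> G e"
  by (simp add: sub_edge_path_def)

lemma sep_nth[simp]: "i < klen \<phi> G e \<Longrightarrow> sub_edge_path \<phi> G e ! i = (e, i)"
  by (simp add: sub_edge_path_def)

lemma sub_path_cons[simp]: "sub_path \<phi> G (e#p) = sub_edge_path \<phi> G e @ sub_path \<phi> G p"
  by (simp add: sub_path_def)

lemma sep_immersed:
  assumes "labeled_graph G" "e \<in> edges G" "0 < klen \<phi> G e"
  shows "immersed (subdiv \<phi> G) (sub_edge_path \<phi> G e)"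
proof -
  have ne: "einv G e \<noteq> e" using assms unfolding labeled_graph_def by blast
  show ?thesis
    unfolding immersed_def edge_path_def
    using assms ne by (auto simp: subdiv_simps sub_edge_path_def)
qed

lemma connect:
  assumes "ter (subdiv \<phi> G) (e,i) = org (subdiv \<phi> G) (e',i')"
    and "(e',i') \<noteq> einv (subdiv \<phi> G) (e,i)"
  shows "(e' = e \<and> i' = Suc i) \<or> (Suc i = klen \<phi> G e \<and> i' = 0 \<and> ter G e = org G e' \<and> e' \<noteq> einv G e)"
proof (cases "Suc i = klen \<phi> G e")
  case True
  then show ?thesis using assms by (auto simp: subdiv_simps split: if_splits)
next
  case False
  then have "i' \<noteq> 0" using assms by (auto simp: subdiv_simps split: if_splits)
  then have "{(e, Suc i), (einv G e, klen \<phi> G e - Suc i)} = {(e', i'), (einv G e', klen \<phi> G e' - i')}"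
    using assms False by (auto simp: subdiv_simps)
  then have "(e',i') \<in> {(e, Suc i), (einv G e, klen \<phi> G e - Suc i)}" by blast
  then show ?thesis using assms(2) by (auto simp: subdiv_simps)
qed

lemma sub_path_immersed:
  assumes "labeled_graph G" "is_aut \<phi>" "immersed G p"
  shows "immersed (subdiv \<phi> G) (sub_path \<phi> G p)"
  using assms(3)
proof (induction p)
  case Nil then show ?case by (simp add: immersed_def edge_path_def)
next
  case (Cons e p')
  have eE: "e \<in> edges G" using Cons.prems by (simp add: immersed_def edge_path_def)
  have kp: "0 < klen \<phi> G e" using klen_pos[OF assms(2)] .
  have I1: "immersed (subdiv \<phi> G) (sub_edge_path \<phi> G e)" using sep_immersed[OF assms(1) eE kp] .
  show ?case
  proof (cases "p' = []")
    case True then show ?thesis using I1 by (simp add: sub_path_def)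
  next
    case False
    have C: "ter G e = org G (hd p') \<and> hd p' \<noteq> einv G e \<and> immersed G p'"
      using Cons.prems imm_cons[OF False] by blast
    obtain f q where pf: "p' = f # q" using False by (cases p') auto
    have kf: "0 < klen \<phi> G f" using klen_pos[OF assms(2)] .
    have hd2: "hd (sub_path \<phi> G p') = (f, 0)" using kf pf
      by (simp add: sub_edge_path_def hd_append upt_conv_Cons)
    have ne2: "sub_path \<phi> G p' \<noteq> []" using kf pf by (simp add: sub_edge_path_def)
    have ne1: "sub_edge_path \<phi> G e \<noteq> []" using kp by (simp add: sub_edge_path_def)
    have last1: "last (sub_edge_path \<phi> G e) = (e, klen \<phi> G e - 1)"
      using kp by (simp add: sub_edge_path_def last_map)
    have I2: "immersed (subdiv \<phi> G) (sub_path \<phi> G p')" using Cons.IH C by blast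
    show ?thesis
      unfolding sub_path_cons imm_append[OF ne1 ne2]
      using I1 I2 C pf hd2 last1 kp by (simp add: subdiv_simps)
  qed
qed

theorem lemma9p3:
  fixes \<Sigma> :: "('v, 'e, 'b::finite) lgraph"
    and \<phi> :: "'b \<Rightarrow> 'b letter list"
    and \<sigma> :: "('e \<times> nat) list"
  assumes "labeled_graph \<Sigma>"
    and "is_aut \<phi>"
    and "immersed (subdiv \<phi> \<Sigma>) \<sigma>"
  shows "\<exists>\<sigma>h \<sigma>0 \<sigma>m. immersed \<Sigma> \<sigma>h
           \<and> prefix \<sigma>0 (sub_edge_path \<phi> \<Sigma> (hd \<sigma>h))
           \<and> suffix \<sigma>m (sub_edge_path \<phi> \<Sigma> (last \<sigma>h))
           \<and> \<sigma>0 \<noteq> sub_edge_path \<phi> \<Sigma> (hd \<sigma>h)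
           \<and> \<sigma>m \<noteq> sub_edge_path \<phi> \<Sigma> (last \<sigma>h)
           \<and> immersed (subdiv \<phi> \<Sigma>) (\<sigma>0 @ \<sigma> @ \<sigma>m)
           \<and> sub_path \<phi> \<Sigma> \<sigma>h = \<sigma>0 @ \<sigma> @ \<sigma>m"
proof -
  let ?S = "subdiv \<phi> \<Sigma>"
  let ?A = "sub_edge_path \<phi> \<Sigma>"
  let ?k = "klen \<phi> \<Sigma>"
  have key: "\<exists>\<sigma>h a \<sigma>m. immersed \<Sigma> \<sigma>h \<and> a < ?k (hd \<sigma>h) \<and> suffix \<sigma>m (?A (last \<sigma>h))
       \<and> \<sigma>m \<noteq> ?A (last \<sigma>h) \<and> sub_path \<phi> \<Sigma> \<sigma>h = take a (?A (hd \<sigma>h)) @ s @ \<sigma>m"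
    if "immersed ?S s" for s
    using that
  proof (induction s)
    case Nil then show ?case by (simp add: immersed_def edge_path_def)
  next
    case (Cons x s')
    obtain e i where x: "x = (e,i)" by (cases x) auto
    have xE: "x \<in> edges ?S" using Cons.prems by (simp add: immersed_def edge_path_def)
    then have eE: "e \<in> edges \<Sigma>" and ik: "i < ?k e" using x by (auto simp: subdiv_simps)
    have Aeq: "take i (?A e) @ [(e,i)] @ drop (Suc i) (?A e) = ?A e"
      using ik id_take_nth_drop[of i "?A e"] by simp
    show ?case
    proof (cases "s' = []")
      case True
      show ?thesis
      proof (intro exI[of _ "[e]"] exI[of _ i] exI[of _ "drop (Suc i) (?A e)"] conjI)
        show "immersed \<Sigma> [e]" using eE by (simp add: imm_single)
        show "i < ?k (hd [e])" using ik by simp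
        show "suffix (drop (Suc i) (?A e)) (?A (last [e]))" by (simp add: suffix_drop)
        show "drop (Suc i) (?A e) \<noteq> ?A (last [e])"
        proof
          assume "drop (Suc i) (?A e) = ?A (last [e])"
          then have "length (drop (Suc i) (?A e)) = ?k e" by simp
          then show False using ik by simp
        qed
        show "sub_path \<phi> \<Sigma> [e] = take i (?A (hd [e])) @ (x # s') @ drop (Suc i) (?A e)"
          using Aeq True x by (simp add: sub_path_def del: sep_length)
      qed
    next
      case False
      have C: "ter ?S x = org ?S (hd s') \<and> hd s' \<noteq> einv ?S x \<and> immersed ?S s'"
        using Cons.prems imm_cons[OF False] by blast
      then obtain h a \<sigma>m where h: "immersed \<Sigma> h" and a: "a < ?k (hd h)"
        and sm: "suffix \<sigma>m (?A (last h))" "\<sigma>m \<noteq> ?A (last h)"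
        and sp: "sub_path \<phi> \<Sigma> h = take a (?A (hd h)) @ s' @ \<sigma>m"
        using Cons.IH by blast
      have hne: "h \<noteq> []" using h by (simp add: immersed_def edge_path_def)
      then obtain f q where hf: "h = f # q" by (cases h) auto
      have "sub_path \<phi> \<Sigma> h ! a = ?A f ! a" using hf a by (simp add: nth_append)
      moreover have "(take a (?A (hd h)) @ s' @ \<sigma>m) ! a = hd s'"
        using a False by (simp add: nth_append hd_conv_nth min_def)
      ultimately have hs: "hd s' = (f, a)" using sp a hf by simp
      have conn: "(f = e \<and> a = Suc i) \<or> (Suc i = ?k e \<and> a = 0 \<and> ter \<Sigma> e = org \<Sigma> f \<and> f \<noteq> einv \<Sigma> e)"
        using connect[of \<phi> \<Sigma> e i f a] C x hs by simp
      then show ?thesis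
      proof
        assume A: "f = e \<and> a = Suc i"
        have "take (Suc i) (?A e) = take i (?A e) @ [(e,i)]"
          using ik by (simp add: take_Suc_conv_app_nth)
        then have "sub_path \<phi> \<Sigma> h = take i (?A (hd h)) @ x # s' @ \<sigma>m"
          using sp A hf x by simp
        moreover have "i < ?k (hd h)" using ik A hf by simp
        ultimately show ?thesis using h sm by (intro exI[of _ h] exI[of _ i] exI[of _ \<sigma>m]) simp
      next
        assume B: "Suc i = ?k e \<and> a = 0 \<and> ter \<Sigma> e = org \<Sigma> f \<and> f \<noteq> einv \<Sigma> e"
        have h2: "immersed \<Sigma> (e # h)" using imm_cons[OF hne, of \<Sigma> e] eE B h hf by simp
        have d: "drop (Suc i) (?A e) = []" using B by simp
        have "?A e = take i (?A e) @ [(e,i)]" using Aeq unfolding d by simp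
        then have "sub_path \<phi> \<Sigma> (e # h) = take i (?A (hd (e#h))) @ x # s' @ \<sigma>m"
          using sp B x hf by (simp del: sub_edge_path_def)
        moreover have "last (e # h) = last h" using hne by simp
        moreover have "i < ?k (hd (e#h))" using ik by simp
        ultimately show ?thesis using h2 sm by (intro exI[of _ "e#h"] exI[of _ i] exI[of _ \<sigma>m]) simp
      qed
    qed
  qed
  obtain h a \<sigma>m where h: "immersed \<Sigma> h" and a: "a < ?k (hd h)"
    and sm: "suffix \<sigma>m (?A (last h))" "\<sigma>m \<noteq> ?A (last h)"
    and sp: "sub_path \<phi> \<Sigma> h = take a (?A (hd h)) @ \<sigma> @ \<sigma>m"
    using key[OF assms(3)] by blast
  have "immersed ?S (sub_path \<phi> \<Sigma> h)" using sub_path_immersed[OF assms(1,2) h] .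
  moreover have "take a (?A (hd h)) \<noteq> ?A (hd h)"
    proof
    assume "take a (?A (hd h)) = ?A (hd h)"
    then have "length (take a (?A (hd h))) = ?k (hd h)" by simp
    then show False using a by simp
  qed
  moreover have "prefix (take a (?A (hd h))) (?A (hd h))" by (rule take_is_prefix)
  ultimately show ?thesis using h sm sp by (intro exI[of _ h] exI[of _ "take a (?A (hd h))"] exI[of _ \<sigma>m]) simp
qed

end
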